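(* Let $N=\{1,\ldots,n\}$ and $\mathcal{X}=\{-1,1\}^n$. A random voting rule $\bar\phi:\mathcal{X}\to[-1,1]$ is robust if and only if there exists $w\in\mathbb{R}_+^n$ such that for every $x\in\mathcal{X}$, $\bar\phi(x)$ and $\sum_{i\in N}w_ix_i$ are both nonzero and have the same sign, i.e. $\bar\phi(x)\sum_{i\in N}w_ix_i>0$ for all $x\in\mathcal{X}$.
   Context: A random voting rule $\bar\phi$ chooses outcome $1$ with probability $(1+\bar\phi(x))/2$ and $-1$ with probability $(1-\bar\phi(x))/2$ at profile $x$. Under $p\in\Delta(\mathcal{X})$ (probability distributions on $\mathcal{X}$), the responsiveness of individual $i$ is $(E_p[\bar\phi(x)x_i]+1)/2$. $\bar\phi$ is robust if for every $p\in\Delta(\mathcal{X})$ there is some $i\in N$ with $E_p[\bar\phi(x)x_i]>0$ (responsiveness strictly greater than $1/2$). *)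

theory Defs
  imports "HOL-Analysis.Analysis"
begin

text \<open>Voters are the elements of a finite type 'i (so N = UNIV, n = CARD('i)).
  Profiles are functions from voters to {-1,1}.\<close>

definition profiles :: "('i::finite \<Rightarrow> real) set" where
  "profiles = {x. \<forall>i. x i = 1 \<or> x i = -1}"

definition random_voting_rule :: "(('i::finite \<Rightarrow> real) \<Rightarrow> real) \<Rightarrow> bool" where
  "random_voting_rule phi \<longleftrightarrow> (\<forall>x\<in>profiles. -1 \<le> phi x \<and> phi x \<le> 1)"

definition distributions :: "(('i::finite \<Rightarrow> real) \<Rightarrow> real) set" where
  "distributions = {p. (\<forall>x\<in>profiles. 0 \<le> p x) \<and> (\<Sum>x\<in>profiles. p x) = 1}"

definition expect_corr :: "(('i::finite \<Rightarrow> real) \<Rightarrow> real) \<Rightarrow> (('i \<Rightarrow> real) \<Rightarrow> real) \<Rightarrow> 'i \<Rightarrow> real" where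
  "expect_corr p phi i = (\<Sum>x\<in>profiles. p x * phi x * x i)"

definition robust :: "(('i::finite \<Rightarrow> real) \<Rightarrow> real) \<Rightarrow> bool" where
  "robust phi \<longleftrightarrow> (\<forall>p\<in>distributions. \<exists>i. expect_corr p phi i > 0)"

end

theory Submission
  imports Defs
begin

lemma profiles_finite: "finite (profiles :: ('i::finite \<Rightarrow> real) set)"
proof -
  have "profiles = PiE (UNIV::'i set) (\<lambda>_. {1, -1::real})"
    unfolding profiles_def by (auto simp: PiE_UNIV_domain)
  then show ?thesis using finite_PiE[of "UNIV::'i set" "\<lambda>_. {1, -1::real}"] by simp
qed

theorem propositionA:
  fixes phi :: "('i::finite \<Rightarrow> real) \<Rightarrow> real"
  assumes "random_voting_rule phi"
  shows "robust phi \<longleftrightarrow>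
    (\<exists>w :: 'i \<Rightarrow> real. (\<forall>i. 0 \<le> w i) \<and>
       (\<forall>x\<in>profiles. phi x * (\<Sum>i\<in>UNIV. w i * x i) > 0))"
proof
  assume rob: "robust phi"
  define a :: "('i \<Rightarrow> real) \<Rightarrow> real^'i" where "a x = (\<chi> i. phi x * x i)" for x
  define C where "C = convex hull (a ` profiles)"
  define K :: "(real^'i) set" where "K = {y. \<forall>i. y$i \<le> 0}"
  have fin: "finite (profiles :: ('i \<Rightarrow> real) set)" by (rule profiles_finite)
  have ne: "(\<lambda>_. 1) \<in> (profiles :: ('i \<Rightarrow> real) set)" by (simp add: profiles_def)
  have "convex K" unfolding K_def convex_def by (auto intro: add_nonpos_nonpos mult_nonneg_nonpos)
  moreover have "closed K"
  proof -
    have "K = (\<Inter>i. {y. y$i \<le> 0})" unfolding K_def by auto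
    then show ?thesis by (auto intro!: closed_INT closed_Collect_le continuous_on_component continuous_on_const)
  qed
  moreover have "convex C" unfolding C_def by simp
  moreover have "compact C" unfolding C_def using fin by (simp add: compact_convex_hull finite_imp_compact)
  moreover have "C \<noteq> {}" unfolding C_def using ne by auto
  moreover have "K \<inter> C = {}"
  proof (rule ccontr)
    assume "K \<inter> C \<noteq> {}"
    then obtain y where yK: "y \<in> K" and yC: "y \<in> C" by auto
    have "a ` profiles = \<Union>((\<lambda>x. {a x}) ` profiles)" by auto
    then have "C = {sum (\<lambda>i. c i *\<^sub>R s i) profiles | c s. (\<forall>i\<in>profiles. c i \<ge> 0) \<and> sum c profiles = 1 \<and> (\<forall>i\<in>profiles. s i \<in> {a i})}"
      unfolding C_def by (simp add: convex_hull_finite_union[OF fin])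
    with yC obtain c s where c: "\<forall>i\<in>profiles. c i \<ge> 0" "sum c profiles = 1"
      and s: "\<forall>i\<in>profiles. s i \<in> {a i}" and y: "y = sum (\<lambda>i. c i *\<^sub>R s i) profiles" by auto
    have "c \<in> distributions" using c by (simp add: distributions_def)
    with rob obtain i where i: "expect_corr c phi i > 0" unfolding robust_def by auto
    have "y$i = (\<Sum>x\<in>profiles. c x * (phi x * x i))"
      unfolding y using s by (auto simp: a_def intro!: sum.cong)
    also have "\<dots> = expect_corr c phi i" unfolding expect_corr_def by (simp add: mult.assoc)
    finally have "y$i > 0" using i by simp
    moreover from yK have "y$i \<le> 0" unfolding K_def by blast
    ultimately show False by linarith
  qed
  ultimately obtain v b where vK: "\<forall>y\<in>K. inner v y < b" and vC: "\<forall>y\<in>C. b < inner v y"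
    using separating_hyperplane_closed_compact by metis
  have "(0::real^'i) \<in> K" by (simp add: K_def)
  then have b0: "b > 0" using vK by fastforce
  have w0: "0 \<le> v$i" for i
  proof (rule ccontr)
    assume "\<not> 0 \<le> v$i"
    then have neg: "v$i < 0" by simp
    define t where "t = b / (- v$i)"
    define y :: "real^'i" where "y = (\<chi> j. if j = i then - t else 0)"
    have "y \<in> K" using b0 neg by (auto simp: K_def y_def t_def divide_pos_neg less_imp_le)
    moreover have "inner v y = b"
      using neg by (simp add: y_def t_def inner_vec_def if_distrib[of "\<lambda>z. v$_ * z"] sum.delta cong: if_cong)
    ultimately show False using vK by auto
  qed
  show "\<exists>w :: 'i \<Rightarrow> real. (\<forall>i. 0 \<le> w i) \<and>
       (\<forall>x\<in>profiles. phi x * (\<Sum>i\<in>UNIV. w i * x i) > 0)"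
  proof (intro exI[of _ "\<lambda>i. v$i"] conjI ballI allI)
    fix i show "0 \<le> v$i" by (rule w0)
  next
    fix x :: "'i \<Rightarrow> real" assume x: "x \<in> profiles"
    have "a x \<in> C" unfolding C_def using x by (auto intro: hull_inc)
    then have "b < inner v (a x)" using vC by auto
    also have "inner v (a x) = phi x * (\<Sum>i\<in>UNIV. v$i * x i)"
      by (simp add: a_def inner_vec_def sum_distrib_left algebra_simps)
    finally show "phi x * (\<Sum>i\<in>UNIV. v$i * x i) > 0" using b0 by simp
  qed
next
  assume "\<exists>w :: 'i \<Rightarrow> real. (\<forall>i. 0 \<le> w i) \<and>
       (\<forall>x\<in>profiles. phi x * (\<Sum>i\<in>UNIV. w i * x i) > 0)"
  then obtain w :: "'i \<Rightarrow> real" where w: "\<forall>i. 0 \<le> w i"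
    and pos: "\<forall>x\<in>profiles. phi x * (\<Sum>i\<in>UNIV. w i * x i) > 0" by blast
  have fin: "finite (profiles :: ('i \<Rightarrow> real) set)" by (rule profiles_finite)
  show "robust phi" unfolding robust_def
  proof
    fix p :: "('i \<Rightarrow> real) \<Rightarrow> real" assume p: "p \<in> distributions"
    then have p0: "\<forall>x\<in>profiles. 0 \<le> p x" and p1: "(\<Sum>x\<in>profiles. p x) = 1"
      by (auto simp: distributions_def)
    have eq: "(\<Sum>i\<in>UNIV. w i * expect_corr p phi i) = (\<Sum>x\<in>profiles. p x * (phi x * (\<Sum>i\<in>UNIV. w i * x i)))"
      unfolding expect_corr_def by (simp add: sum_distrib_left sum_distrib_right algebra_simps sum.swap[of _ UNIV])
    obtain x0 where x0: "x0 \<in> profiles" "p x0 > 0"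
    proof (rule ccontr)
      assume "\<not> thesis"
      then have "\<forall>x\<in>profiles. p x = 0" using p0 that by force
      then show False using p1 by simp
    qed
    have "0 < p x0 * (phi x0 * (\<Sum>i\<in>UNIV. w i * x0 i))" using x0 pos by simp
    also have "\<dots> \<le> (\<Sum>x\<in>profiles. p x * (phi x * (\<Sum>i\<in>UNIV. w i * x i)))"
      using fin x0 p0 pos by (intro member_le_sum) (auto intro: mult_nonneg_nonneg less_imp_le)
    finally have "0 < (\<Sum>i\<in>UNIV. w i * expect_corr p phi i)" using eq by simp
    then obtain i where "0 < w i * expect_corr p phi i"
      by (metis (no_types, lifting) not_le sum_nonpos)
    then show "\<exists>i. expect_corr p phi i > 0" using w by (metis mult_le_0_iff not_le order.strict_iff_not)
  qed
qed

end
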